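(* Let $r,n\in\mathbb{Z}_{\geq1}$ and $j\in\mathbb{Z}_{\geq0}$. If $j\leq r$, then \[ \left|\omega_{n,r}(j)-\frac{e^{-1/n}}{j!\,n^j}\right|<\frac{1+2^{r-j}}{j!\,n^j\,(r-j)!}. \] If $j>r$, then $\omega_{n,r}(j)=0$.
   Context: $C_n\wr S_r=C_n^r\rtimes S_r$ (with $S_r$ permuting coordinates) acts on $B(n,r)=C_n\times\{1,\dots,r\}$ by $((\zeta_1,\dots,\zeta_r),\pi)\cdot(\zeta,i)=(\zeta_i\zeta,\pi(i))$. For $\sigma\in C_n\wr S_r$, $\mathrm{Fix}(\sigma)$ is its set of fixed points in $B(n,r)$ (its size is divisible by $n$). The distribution $\omega_{n,r}:\mathbb{Z}_{\geq0}\to\mathbb{R}_{\geq0}$ is $\omega_{n,r}(j)=|\{\sigma\in C_n\wr S_r: |\mathrm{Fix}(\sigma)|=jn\}|/|C_n\wr S_r|$. *)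

theory Defs
  imports Complex_Main "HOL-Library.FuncSet" "HOL-Combinatorics.Permutations"
begin

text \<open>The cyclic group C_n is modelled additively as {0..<n} with addition mod n.\<close>

definition wreath :: "nat \<Rightarrow> nat \<Rightarrow> ((nat \<Rightarrow> nat) \<times> (nat \<Rightarrow> nat)) set" where
  "wreath n r = {(z, p). z \<in> {1..r} \<rightarrow>\<^sub>E {0..<n} \<and> p permutes {1..r}}"

definition Bset :: "nat \<Rightarrow> nat \<Rightarrow> (nat \<times> nat) set" where
  "Bset n r = {0..<n} \<times> {1..r}"

definition wr_act :: "nat \<Rightarrow> (nat \<Rightarrow> nat) \<times> (nat \<Rightarrow> nat) \<Rightarrow> nat \<times> nat \<Rightarrow> nat \<times> nat" where
  "wr_act n \<sigma> x = ((fst \<sigma> (snd x) + fst x) mod n, snd \<sigma> (snd x))"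

definition Fix :: "nat \<Rightarrow> nat \<Rightarrow> (nat \<Rightarrow> nat) \<times> (nat \<Rightarrow> nat) \<Rightarrow> (nat \<times> nat) set" where
  "Fix n r \<sigma> = {x \<in> Bset n r. wr_act n \<sigma> x = x}"

definition omega :: "nat \<Rightarrow> nat \<Rightarrow> nat \<Rightarrow> real" where
  "omega n r j = real (card {\<sigma> \<in> wreath n r. card (Fix n r \<sigma>) = j * n}) / real (card (wreath n r))"

end

theory Submission imports Defs begin

definition Sset :: "nat \<Rightarrow> (nat \<Rightarrow> nat) \<times> (nat \<Rightarrow> nat) \<Rightarrow> nat set" where
  "Sset r \<sigma> = {i \<in> {1..r}. snd \<sigma> i = i \<and> fst \<sigma> i = 0}"

lemma mod_fix: "x < n \<Longrightarrow> (a::nat) < n \<Longrightarrow> ((x + a) mod n = a) \<longleftrightarrow> x = 0"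
proof (cases "x + a < n")
  case True then show ?thesis by simp
next
  case False
  assume h: "x < n" "a < n"
  then have "(x + a) mod n = x + a - n"
    using False by (simp add: le_mod_geq)
  then show ?thesis using False h by auto
qed

lemma Fix_eq:
  assumes "n \<ge> 1" "\<sigma> \<in> wreath n r"
  shows "Fix n r \<sigma> = {0..<n} \<times> Sset r \<sigma>"
proof -
  have z: "fst \<sigma> i < n" if "i \<in> {1..r}" for i
    using assms(2) that by (auto simp: wreath_def PiE_def Pi_def)
  show ?thesis
    unfolding Fix_def Sset_def Bset_def wr_act_def
    using z mod_fix by (auto simp: prod_eq_iff)
qed

lemma card_Fix:
  assumes "n \<ge> 1" "\<sigma> \<in> wreath n r"
  shows "card (Fix n r \<sigma>) = n * card (Sset r \<sigma>)"
  using Fix_eq[OF assms] by (simp add: card_cartesian_product)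

lemma Sset_sub: "Sset r \<sigma> \<subseteq> {1..r}" by (auto simp: Sset_def)

lemma finite_wreath: "finite (wreath n r)"
proof -
  have "wreath n r = ({1..r} \<rightarrow>\<^sub>E {0..<n}) \<times> {p. p permutes {1..r}}"
    by (auto simp: wreath_def)
  then show ?thesis by (simp add: finite_PiE finite_permutations)
qed

lemma count_T:
  assumes "n \<ge> 1" "T \<subseteq> {1..r}"
  shows "card {\<sigma> \<in> wreath n r. T \<subseteq> Sset r \<sigma>} = n ^ (r - card T) * fact (r - card T)"
proof -
  have fT: "finite T" using assms(2) finite_subset by blast
  define Z where "Z = (\<Pi>\<^sub>E i\<in>{1..r}. if i \<in> T then {0} else {0..<(n::nat)})"
  have eq: "{\<sigma> \<in> wreath n r. T \<subseteq> Sset r \<sigma>} = Z \<times> {p. p permutes ({1..r} - T)}"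
  proof (intro set_eqI iffI)
    fix x assume x: "x \<in> {\<sigma> \<in> wreath n r. T \<subseteq> Sset r \<sigma>}"
    obtain z p where xp: "x = (z, p)" by fastforce
    have zA: "z \<in> {1..r} \<rightarrow>\<^sub>E {0..<n}" and pA: "p permutes {1..r}"
      using x by (simp_all add: xp wreath_def)
    have TS: "T \<subseteq> Sset r (z, p)" using x by (simp add: xp)
    have pT: "p i = i" and zT: "z i = 0" if "i \<in> T" for i
      using TS that unfolding Sset_def by auto
    have "p permutes ({1..r} - T)"
      by (rule permutes_superset[OF pA]) (simp add: pT)
    moreover have "z \<in> Z"
      unfolding Z_def PiE_iff
    proof
      show "\<forall>i\<in>{1..r}. z i \<in> (if i \<in> T then {0} else {0..<n})"
        using zA zT by (auto simp: PiE_iff)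
      show "z \<in> extensional {1..r}" using zA by (simp add: PiE_iff)
    qed
    ultimately show "x \<in> Z \<times> {p. p permutes ({1..r} - T)}"
      by (simp add: xp)
  next
    fix x assume x: "x \<in> Z \<times> {p. p permutes ({1..r} - T)}"
    obtain z p where xp: "x = (z, p)" by fastforce
    have zz: "z \<in> Z" and pp: "p permutes ({1..r} - T)"
      using x by (simp_all add: xp)
    have zz': "\<forall>i\<in>{1..r}. z i \<in> (if i \<in> T then {0} else {0..<n})" "z \<in> extensional {1..r}"
      using zz unfolding Z_def PiE_iff by blast+
    have "p permutes {1..r}" using pp by (rule permutes_subset) auto
    moreover have pT: "p i = i" if "i \<in> T" for i using pp that by (simp add: permutes_not_in)
    moreover have "z \<in> {1..r} \<rightarrow>\<^sub>E {0..<n}"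
      unfolding PiE_iff
    proof
      show "\<forall>i\<in>{1..r}. z i \<in> {0..<n}"
      proof
        fix i assume i: "i \<in> {1..r}"
        show "z i \<in> {0..<n}" using zz'(1)[rule_format, OF i] assms(1) by (cases "i \<in> T") auto
      qed
      show "z \<in> extensional {1..r}" by (rule zz'(2))
    qed
    moreover have zT: "z i = 0" if "i \<in> T" for i
      using zz'(1) that assms(2) by (metis empty_iff insert_iff subsetD)
    moreover have "T \<subseteq> Sset r (z, p)"
      unfolding Sset_def using assms(2) pT zT by auto
    ultimately show "x \<in> {\<sigma> \<in> wreath n r. T \<subseteq> Sset r \<sigma>}"
      by (simp add: xp wreath_def)
  qed
  have c1: "card ({1..r} - T) = r - card T" using assms(2) fT by (simp add: card_Diff_subset)
  have "card Z = (\<Prod>i\<in>{1..r}. card (if i \<in> T then {0} else {0..<n}))"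
    unfolding Z_def by (rule card_PiE) simp
  also have "\<dots> = (\<Prod>i\<in>{1..r}. if i \<in> T then 1 else n)"
    by (rule prod.cong) auto
  also have "\<dots> = (\<Prod>i\<in>{1..r} \<inter> {i. i \<in> T}. 1) * (\<Prod>i\<in>{1..r} \<inter> - {i. i \<in> T}. n)"
    by (rule prod.If_cases) simp
  also have "\<dots> = n ^ card ({1..r} - T)"
    by (simp add: Diff_eq)
  finally have c2: "card Z = n ^ (r - card T)"
    using c1 by simp
  have c3: "card {p. p permutes ({1..r} - T)} = fact (r - card T)"
    using c1 by (intro card_permutations) auto
  show ?thesis unfolding eq using c2 c3 by (simp add: card_cartesian_product)
qed


lemma sum_reindex_from:
  fixes f :: "nat \<Rightarrow> real"
  assumes "\<And>k. k < j \<Longrightarrow> f k = 0" "j \<le> s"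
  shows "(\<Sum>k\<le>s. f k) = (\<Sum>l\<le>s-j. f (l + j))"
proof -
  have "(\<Sum>k\<le>s. f k) = (\<Sum>k\<in>{j..s}. f k)"
    using assms(1) by (intro sum.mono_neutral_right) auto
  also have "\<dots> = (\<Sum>k\<in>{0+j..(s-j)+j}. f k)" using assms(2) by simp
  also have "\<dots> = (\<Sum>l\<in>{0..s-j}. f (l + j))" by (rule sum.shift_bounds_cl_nat_ivl)
  finally show ?thesis by (simp add: atLeast0AtMost)
qed

definition cc :: "nat \<Rightarrow> nat \<Rightarrow> real" where
  "cc j k = (-1) ^ (k - j) * real (k choose j)"

lemma choose_ind:
  "(\<Sum>k\<le>s. real (s choose k) * cc j k) = (if s = j then 1 else 0)"
proof (cases "j \<le> s")
  case False
  then show ?thesis by (auto simp: cc_def intro!: sum.neutral)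
next
  case True
  have "(\<Sum>k\<le>s. real (s choose k) * cc j k) = (\<Sum>l\<le>s-j. real (s choose (l+j)) * cc j (l+j))"
    using True by (intro sum_reindex_from) (auto simp: cc_def)
  also have "\<dots> = (\<Sum>l\<le>s-j. real (s choose j) * ((-1) ^ l * real ((s - j) choose l)))"
  proof (intro sum.cong refl)
    fix l assume "l \<in> {..s-j}"
    then have "l + j \<le> s" using True by auto
    then have "(s choose (l+j)) * ((l+j) choose j) = (s choose j) * ((s - j) choose l)"
      using choose_mult[of j "l+j" s] by simp
    then have "real (s choose (l+j)) * real ((l+j) choose j) = real (s choose j) * real ((s - j) choose l)"
      by (metis of_nat_mult)
    then show "real (s choose (l+j)) * cc j (l+j) = real (s choose j) * ((-1) ^ l * real ((s - j) choose l))"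
      by (simp add: cc_def algebra_simps)
  qed
  also have "\<dots> = real (s choose j) * (\<Sum>l\<le>s-j. (-1) ^ l * real ((s - j) choose l))"
    by (simp add: sum_distrib_left)
  also have "\<dots> = (if s = j then 1 else 0)"
  proof (cases "s = j")
    case True then show ?thesis by simp
  next
    case False
    then have "s - j > 0" using \<open>j \<le> s\<close> by auto
    then show ?thesis using False choose_alternating_sum[of "s-j"] by simp
  qed
  finally show ?thesis .
qed

lemma sum_pow_card:
  fixes g :: "nat \<Rightarrow> real"
  assumes "finite A"
  shows "(\<Sum>T\<in>Pow A. g (card T)) = (\<Sum>k\<le>card A. real (card A choose k) * g k)"
proof -
  have "(\<Sum>T\<in>Pow A. g (card T)) = (\<Sum>k\<le>card A. \<Sum>T\<in>{T \<in> Pow A. card T = k}. g (card T))"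
    using assms by (intro sum.group[symmetric]) (auto intro: card_mono)
  also have "\<dots> = (\<Sum>k\<le>card A. real (card A choose k) * g k)"
  proof (intro sum.cong refl)
    fix k
    have "{T \<in> Pow A. card T = k} = {B. B \<subseteq> A \<and> card B = k}" by auto
    then have "card {T \<in> Pow A. card T = k} = card A choose k" using n_subsets[OF assms] by simp
    then show "(\<Sum>T\<in>{T \<in> Pow A. card T = k}. g (card T)) = real (card A choose k) * g k"
      by simp
  qed
  finally show ?thesis .
qed

lemma count_formula:
  assumes "n \<ge> 1"
  shows "real (card {\<sigma> \<in> wreath n r. card (Sset r \<sigma>) = j}) =
    (\<Sum>k\<le>r. real (r choose k) * cc j k * real n ^ (r - k) * fact (r - k))"
proof -
  let ?W = "wreath n r"
  have fS: "finite (Sset r \<sigma>)" for \<sigma> using Sset_sub finite_subset by blast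
  have "real (card {\<sigma> \<in> ?W. card (Sset r \<sigma>) = j}) = (\<Sum>\<sigma>\<in>?W. if card (Sset r \<sigma>) = j then 1 else 0)"
    using finite_wreath by (simp add: sum.If_cases Int_def)
  also have "\<dots> = (\<Sum>\<sigma>\<in>?W. \<Sum>T\<in>Pow (Sset r \<sigma>). cc j (card T))"
    by (simp add: sum_pow_card[OF fS] choose_ind)
  also have "\<dots> = (\<Sum>\<sigma>\<in>?W. \<Sum>T\<in>Pow {1..r}. if T \<subseteq> Sset r \<sigma> then cc j (card T) else 0)"
  proof (rule sum.cong[OF refl])
    fix \<sigma>
    have eq: "Pow (Sset r \<sigma>) = {T \<in> Pow {1..r}. T \<subseteq> Sset r \<sigma>}" using Sset_sub[of r \<sigma>] by auto
    show "(\<Sum>T\<in>Pow (Sset r \<sigma>). cc j (card T)) = (\<Sum>T\<in>Pow {1..r}. if T \<subseteq> Sset r \<sigma> then cc j (card T) else 0)"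
      unfolding eq by (rule sum.inter_filter) simp
  qed
  also have "\<dots> = (\<Sum>T\<in>Pow {1..r}. \<Sum>\<sigma>\<in>?W. if T \<subseteq> Sset r \<sigma> then cc j (card T) else 0)"
    by (rule sum.swap)
  also have "\<dots> = (\<Sum>T\<in>Pow {1..r}. cc j (card T) * real n ^ (r - card T) * fact (r - card T))"
  proof (intro sum.cong refl)
    fix T assume T: "T \<in> Pow {1..r}"
    have "(\<Sum>\<sigma>\<in>?W. if T \<subseteq> Sset r \<sigma> then cc j (card T) else 0) = cc j (card T) * real (card {\<sigma> \<in> ?W. T \<subseteq> Sset r \<sigma>})"
      using finite_wreath by (simp add: sum.If_cases Int_def)
    also have "\<dots> = cc j (card T) * real n ^ (r - card T) * fact (r - card T)"
      using count_T[OF assms, of T r] T by simp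
    finally show "(\<Sum>\<sigma>\<in>?W. if T \<subseteq> Sset r \<sigma> then cc j (card T) else 0) = cc j (card T) * real n ^ (r - card T) * fact (r - card T)" .
  qed
  also have "\<dots> = (\<Sum>k\<le>r. real (r choose k) * (cc j k * real n ^ (r - k) * fact (r - k)))"
    using sum_pow_card[of "{1..r}" "\<lambda>k. cc j k * real n ^ (r - k) * fact (r - k)"] by simp
  finally show ?thesis by (simp add: mult.assoc)
qed

lemma card_wreath:
  assumes "n \<ge> 1"
  shows "card (wreath n r) = n ^ r * fact r"
proof -
  have "card {\<sigma> \<in> wreath n r. {} \<subseteq> Sset r \<sigma>} = n ^ (r - card ({}::nat set)) * fact (r - card ({}::nat set))"
    by (rule count_T[OF assms]) simp
  moreover have "{\<sigma> \<in> wreath n r. {} \<subseteq> Sset r \<sigma>} = wreath n r" by blast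
  ultimately show ?thesis by (simp only: card.empty diff_zero)
qed


lemma exp_part:
  fixes m n :: nat
  assumes "n \<ge> 1"
  shows "\<bar>(\<Sum>l\<le>m. (-1 / real n) ^ l / fact l) - exp (-1 / real n)\<bar> < (1 + 2 ^ m) / fact m"
proof -
  define x where "x = -1 / real n"
  have x1: "\<bar>x\<bar> \<le> 1" using assms by (simp add: x_def)
  have x0: "x \<le> 0" by (simp add: x_def)
  show ?thesis
  proof (cases "m = 0")
    case True
    have e: "exp (-(1/real n)) > 0" "exp (-(1/real n)) \<le> 1" by auto
    have "\<bar>1 - exp (-(1/real n))\<bar> = 1 - exp (-(1/real n))" using e(2) by simp
    also have "\<dots> < 2" using e(1) by linarith
    finally have "\<bar>1 - exp (-(1/real n))\<bar> < 2" .
    then show ?thesis using True by simp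
  next
    case False
    obtain t where t: "\<bar>t\<bar> \<le> \<bar>x\<bar>" "exp x = (\<Sum>i<Suc m. x ^ i / fact i) + (exp t / fact (Suc m)) * x ^ Suc m"
      using Maclaurin_exp_le[of x "Suc m"] by blast
    have "exp t \<le> exp 1" using t(1) x1 by simp
    also have "exp (1::real) \<le> 3" using exp_le by simp
    finally have et: "exp t \<le> 3" .
    have "\<bar>x\<bar> ^ Suc m \<le> 1" by (rule power_le_one) (use x1 in auto)
    then have "\<bar>x ^ Suc m\<bar> \<le> 1" by (simp only: power_abs)
    then have xs: "\<bar>x ^ Suc m\<bar> \<le> 1" .
    have a0: "exp t / fact (Suc m) \<ge> 0" by simp
    have "\<bar>(exp t / fact (Suc m)) * x ^ Suc m\<bar> = exp t / fact (Suc m) * \<bar>x ^ Suc m\<bar>"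
      by (simp only: abs_mult abs_of_nonneg[OF a0])
    also have "\<dots> \<le> exp t / fact (Suc m) * 1" by (rule mult_left_mono[OF xs a0])
    also have "\<dots> = exp t / fact (Suc m)" by simp
    finally have "\<bar>(exp t / fact (Suc m)) * x ^ Suc m\<bar> \<le> exp t / fact (Suc m)" .
    also have "\<dots> \<le> 3 / fact (Suc m)" using et by (simp add: divide_right_mono)
    also have "\<dots> = (3 / real (Suc m)) / fact m" by (simp add: fact_Suc)
    also have "\<dots> < (1 + 2 ^ m) / fact m"
    proof (rule divide_strict_right_mono)
      have m1: "real (Suc m) \<ge> 2" using False by simp
      have "(2::real) ^ m \<ge> 2" using False
        by (metis One_nat_def Suc_leI neq0_conv power_increasing power_one_right one_le_numeral)
      then have "(3::real) \<le> (1 + 2 ^ m)" by simp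
      also have "\<dots> < (1 + 2 ^ m) * real (Suc m)"
      proof -
        have p: "(0::real) < (1 + 2 ^ m) * real m"
          using False by (intro mult_pos_pos add_pos_pos) auto
        have "(1 + 2 ^ m) * real (Suc m) = (1 + 2 ^ m) + (1 + 2 ^ m) * real m"
          by (simp add: algebra_simps)
        then show ?thesis using p by linarith
      qed
      finally have "3 < (1 + 2 ^ m) * real (Suc m)" .
      then show "3 / real (Suc m) < 1 + 2 ^ m" by (simp add: divide_less_eq)
    qed simp
    finally have r: "\<bar>(exp t / fact (Suc m)) * x ^ Suc m\<bar> < (1 + 2 ^ m) / fact m" .
    have sm: "(\<Sum>i<Suc m. x ^ i / fact i) = (\<Sum>l\<le>m. x ^ l / fact l)" by (simp only: lessThan_Suc_atMost)
    have "(\<Sum>l\<le>m. x ^ l / fact l) - exp x = - ((exp t / fact (Suc m)) * x ^ Suc m)"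
      using t(2) sm by linarith
    then have "\<bar>(\<Sum>l\<le>m. x ^ l / fact l) - exp x\<bar> < (1 + 2 ^ m) / fact m"
      using r by (simp only: abs_minus_cancel)
    then show ?thesis unfolding x_def .
  qed
qed

lemma term_simp:
  assumes "k \<le> r" "n \<ge> 1"
  shows "real (r choose k) * real n ^ (r - k) * fact (r - k) / (real n ^ r * fact r) = 1 / (fact k * real n ^ k)"
proof -
  have "real n ^ r = real n ^ k * real n ^ (r - k)" using assms(1) by (simp flip: power_add)
  moreover have "real (r choose k) = fact r / (fact k * fact (r - k))" using assms(1) by (rule binomial_fact)
  ultimately show ?thesis using assms(2) by (simp add: field_simps)
qed

lemma term_simp2:
  assumes "n \<ge> 1"
  shows "cc j (l + j) / (fact (l + j) * real n ^ (l + j)) = ((-1 / real n) ^ l / fact l) / (fact j * real n ^ j)"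
proof -
  have "real ((l + j) choose j) = fact (l + j) / (fact j * fact l)" using binomial_fact[of j "l+j"] by simp
  moreover have "(- (1 / real n))^l = (-1)^l / real n ^ l" by (metis minus_divide_left power_divide)
  ultimately show ?thesis using assms by (simp add: cc_def field_simps power_add)
qed

lemma omega_formula:
  assumes "n \<ge> 1" "j \<le> r"
  shows "omega n r j = (\<Sum>l\<le>r-j. (-1 / real n) ^ l / fact l) / (fact j * real n ^ j)"
proof -
  have set_eq: "{\<sigma> \<in> wreath n r. card (Fix n r \<sigma>) = j * n} = {\<sigma> \<in> wreath n r. card (Sset r \<sigma>) = j}"
    using card_Fix[OF assms(1)] assms(1) by auto
  have "omega n r j = (\<Sum>k\<le>r. real (r choose k) * cc j k * real n ^ (r - k) * fact (r - k)) / (real n ^ r * fact r)"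
    unfolding omega_def set_eq count_formula[OF assms(1)] card_wreath[OF assms(1)] by simp
  also have "\<dots> = (\<Sum>k\<le>r. cc j k * (real (r choose k) * real n ^ (r - k) * fact (r - k) / (real n ^ r * fact r)))"
    by (simp add: sum_divide_distrib algebra_simps)
  also have "\<dots> = (\<Sum>k\<le>r. cc j k / (fact k * real n ^ k))"
    using term_simp[OF _ assms(1)] by (intro sum.cong) auto
  also have "\<dots> = (\<Sum>l\<le>r-j. cc j (l + j) / (fact (l + j) * real n ^ (l + j)))"
    using assms(2) by (intro sum_reindex_from) (auto simp: cc_def)
  also have "\<dots> = (\<Sum>l\<le>r-j. ((-1 / real n) ^ l / fact l) / (fact j * real n ^ j))"
    using term_simp2[OF assms(1)] by simp
  finally show ?thesis by (simp add: sum_divide_distrib)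
qed

lemma omega_zero:
  assumes "n \<ge> 1" "r < j"
  shows "omega n r j = 0"
proof -
  have E: "{\<sigma> \<in> wreath n r. card (Fix n r \<sigma>) = j * n} = {}"
  proof -
    have c: "card (Sset r \<sigma>) \<le> r" for \<sigma> using card_mono[OF _ Sset_sub[of r \<sigma>]] by simp
    have False if "\<sigma> \<in> wreath n r" "card (Fix n r \<sigma>) = j * n" for \<sigma>
    proof -
      have "n * card (Sset r \<sigma>) = n * j" using that card_Fix[OF assms(1) that(1)] by (simp add: mult.commute)
      then have "card (Sset r \<sigma>) = j" using assms(1) by (metis mult_cancel1 not_one_le_zero)
      then show False using c[of \<sigma>] assms(2) by simp
    qed
    then show ?thesis by auto
  qed
  show ?thesis unfolding omega_def E by simp
qed

theorem mainTheorem4: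
  fixes n r j :: nat
  assumes "n \<ge> 1" and "r \<ge> 1"
  shows "(j \<le> r \<longrightarrow>
           \<bar>omega n r j - exp (- 1 / real n) / (fact j * real n ^ j)\<bar>
             < (1 + 2 ^ (r - j)) / (fact j * real n ^ j * fact (r - j)))
       \<and> (j > r \<longrightarrow> omega n r j = 0)"
proof (intro conjI impI)
  assume "j > r" then show "omega n r j = 0" using omega_zero assms by simp
next
  assume j: "j \<le> r"
  define D where "D = fact j * real n ^ j"
  have D: "D > 0" using assms by (simp add: D_def)
  have "\<bar>omega n r j - exp (- 1 / real n) / D\<bar> =
      \<bar>(\<Sum>l\<le>r-j. (-1 / real n) ^ l / fact l) - exp (-1 / real n)\<bar> / D"
    using D by (simp add: omega_formula[OF assms(1) j] D_def[symmetric] diff_divide_distrib[symmetric])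
  also have "\<dots> < ((1 + 2 ^ (r - j)) / fact (r - j)) / D"
    by (rule divide_strict_right_mono[OF exp_part[OF assms(1), of "r - j"] D])
  finally show "\<bar>omega n r j - exp (- 1 / real n) / (fact j * real n ^ j)\<bar>
             < (1 + 2 ^ (r - j)) / (fact j * real n ^ j * fact (r - j))"
    by (simp add: D_def field_simps)
qed

end
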